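(* Under the hypotheses below (for SGDA or SEG), for all $x^*\in X^*$ there exist constants $c_1\in(0,1)$, $c_2\in(0,\infty)$ such that, with $V(x,x^* )=\|x-x^*\|^2+1$ (a function $\mathbb{R}^d\to[1,\infty)$), $$\mathbb{E}\big[V(X_{t+1},x^* )\mid\mathcal{F}_t\big]\le c_1 V(X_t,x^* )+c_2\quad\text{for all }t\ge0.$$ Hypotheses: $F:\mathbb{R}^d\to\mathbb{R}^d$, $X^*=\{x:F(x)=0\}$ nonempty with some $x^*\in X^*$, $\|x^*\|\le R$; there are $\lambda\ge0,\mu>0$ with $\langle F(x),x-x^*\rangle\ge\mu\|x-x^*\|^2-\lambda$ for all $x$ and some $x^*\in X^*$; the stochastic oracle assumptions of the context hold; and either (i) SGDA $X_{t+1}=X_t-\gamma(F(X_t)+U_t(X_t))$ with $\|F(x)\|\le G(1+\|x\|)$ for all $x$ and $0<\gamma<\mu/G^2$, or (ii) SEG $X_{t+1/2}=X_t-\gamma(F(X_t)+U_t(X_t))$, $X_{t+1}=X_t-\alpha\gamma(F(X_{t+1/2})+U_{t+1/2}(X_{t+1/2}))$ with $F$ $L$-Lipschitz, $0<\gamma<\frac1{2\mu+\sqrt3 L}$, $\alpha\in(0,1)$.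
   Context: Stochastic oracle: the noise fields $(U_t(\cdot))$ (and $U_{t+1/2}$ for SEG) are i.i.d. random fields; there is a filtration $(\mathcal{F}_t)$ (history of the iterates, $\mathcal{F}_{t+1/2}=\mathcal{F}_t$) with $U_t(X_t)$ $\mathcal{F}_{t+1}$-measurable but not $\mathcal{F}_t$-measurable, $\mathbb{E}[U_t(x)\mid\mathcal{F}_t]=0$ and $\mathbb{E}[\|U_t(x)\|^2\mid\mathcal{F}_t]\le\sigma^2$ for all $x$, for some $\sigma>0$. *)

theory Defs
  imports "HOL-Analysis.Analysis" "HOL-Probability.Probability"
begin

definition lyapV :: "'a::real_normed_vector \<Rightarrow> 'a \<Rightarrow> real" where
  "lyapV x xs = (norm (x - xs))\<^sup>2 + 1"

definition oracle_noise ::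
  "'w measure \<Rightarrow> 'w measure \<Rightarrow> ('w \<Rightarrow> 'a::euclidean_space \<Rightarrow> 'a) \<Rightarrow> real \<Rightarrow> bool" where
  "oracle_noise M G W \<sigma> \<longleftrightarrow>
     (\<forall>Y \<in> borel_measurable G.
        (\<lambda>\<omega>. W \<omega> (Y \<omega>)) \<in> borel_measurable M \<and>
        integrable M (\<lambda>\<omega>. W \<omega> (Y \<omega>)) \<and>
        (\<forall>b\<in>Basis. AE \<omega> in M. real_cond_exp M G (\<lambda>\<omega>. W \<omega> (Y \<omega>) \<bullet> b) \<omega> = 0) \<and>
        (AE \<omega> in M. nn_cond_exp M G (\<lambda>\<omega>. ennreal ((norm (W \<omega> (Y \<omega>)))\<^sup>2)) \<omega>
                        \<le> ennreal (\<sigma>\<^sup>2)))"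

end

theory Submission
  imports Defs
begin

lemma nn_real_cond:
  assumes sf: "sigma_finite_subalgebra M G" and int: "integrable M g"
    and nn: "\<And>x. x \<in> space M \<Longrightarrow> 0 \<le> g x"
  shows "AE x in M. nn_cond_exp M G (\<lambda>x. ennreal (g x)) x = ennreal (real_cond_exp M G g x)"
proof -
  interpret sigma_finite_subalgebra M G by fact
  have gm[measurable]: "g \<in> borel_measurable M" using int by auto
  have pos: "AE x in M. 0 \<le> real_cond_exp M G g x" by (rule real_cond_exp_pos) (use nn in auto)
  have "AE x in M. ennreal (real_cond_exp M G g x) = nn_cond_exp M G (\<lambda>x. ennreal (g x)) x"
  proof (rule nn_cond_exp_charact)
    fix A assume A[measurable]: "A \<in> sets G"
    then have AM[measurable]: "A \<in> sets M" using subalg by (meson subalgebra_def subsetD)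
    have iA: "integrable M (\<lambda>x. indicator A x * g x)"
      using integrable_real_mult_indicator[OF AM int] by (simp add: mult.commute)
    have "(\<integral>\<^sup>+ x \<in> A. ennreal (g x) \<partial>M) = (\<integral>\<^sup>+ x. ennreal (indicator A x * g x) \<partial>M)"
      by (intro nn_integral_cong) (auto simp: indicator_def)
    also have "\<dots> = ennreal (\<integral> x. indicator A x * g x \<partial>M)"
      by (intro nn_integral_eq_integral iA AE_I2) (auto simp: nn indicator_def)
    also have "(\<integral> x. indicator A x * g x \<partial>M) = (\<integral> x. indicator A x * real_cond_exp M G g x \<partial>M)"
      by (rule real_cond_exp_intg(2)[symmetric]) (auto intro: iA)
    also have "ennreal \<dots> = (\<integral>\<^sup>+ x. ennreal (indicator A x * real_cond_exp M G g x) \<partial>M)"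
      apply (rule nn_integral_eq_integral[symmetric])
       apply (rule real_cond_exp_intg(1)) apply (auto intro: iA)
      using pos by eventually_elim (auto simp: indicator_def)
    also have "\<dots> = (\<integral>\<^sup>+ x \<in> A. ennreal (real_cond_exp M G g x) \<partial>M)"
      by (intro nn_integral_cong) (auto simp: indicator_def)
    finally show "(\<integral>\<^sup>+ x \<in> A. ennreal (g x) \<partial>M) = (\<integral>\<^sup>+ x \<in> A. ennreal (real_cond_exp M G g x) \<partial>M)" .
  qed auto
  then show ?thesis by auto
qed

lemma key:
  fixes U D :: "'w \<Rightarrow> 'a::euclidean_space" and P Z :: "'w \<Rightarrow> real"
  assumes ps: "prob_space M" and sub: "subalgebra M G"
    and Um[measurable]: "U \<in> borel_measurable M" and Ui: "integrable M U"
    and Uc: "\<forall>b\<in>Basis. AE x in M. real_cond_exp M G (\<lambda>x. U x \<bullet> b) x = 0"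
    and Uv: "AE x in M. nn_cond_exp M G (\<lambda>x. ennreal ((norm (U x))\<^sup>2)) x \<le> ennreal (\<sigma>\<^sup>2)"
    and PG[measurable]: "P \<in> borel_measurable G" and DG[measurable]: "D \<in> borel_measurable G"
    and K: "K \<ge> 0" and Zm[measurable]: "Z \<in> borel_measurable M"
    and Zb: "\<And>x. x \<in> space M \<Longrightarrow> 0 \<le> Z x \<and> Z x \<le> P x + D x \<bullet> U x + K * (norm (U x))\<^sup>2"
  shows "AE x in M. nn_cond_exp M G (\<lambda>x. ennreal (Z x)) x \<le> ennreal (P x + K * \<sigma>\<^sup>2)"
proof -
  interpret prob_space M by fact
  interpret finite_measure_subalgebra M G by unfold_locales (rule sub)
  have PM[measurable]: "P \<in> borel_measurable M" by (rule measurable_from_subalg[OF subalg PG])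
  have DM[measurable]: "D \<in> borel_measurable M" by (rule measurable_from_subalg[OF subalg DG])
  define w where "w = (\<lambda>x. 1 / (1 + \<bar>P x\<bar> + norm (D x)))"
  have wG[measurable]: "w \<in> borel_measurable G" unfolding w_def by measurable
  have wM[measurable]: "w \<in> borel_measurable M" by (rule measurable_from_subalg[OF subalg wG])
  have den: "0 < 1 + \<bar>P x\<bar> + norm (D x)" for x by (simp add: add_pos_nonneg)
  have wpos: "0 < w x" for x unfolding w_def by (simp add: add_pos_nonneg)
  have wP: "w x * \<bar>P x\<bar> \<le> 1" for x
    using den[of x] unfolding w_def by (simp add: field_simps)
  have wD: "w x * norm (D x) \<le> 1" for x
    using den[of x] unfolding w_def by (simp add: field_simps)
  have w1: "w x \<le> 1" for x
    using den[of x] unfolding w_def by (simp add: field_simps)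
  define R where "R = (\<lambda>x. P x + D x \<bullet> U x + K * (norm (U x))\<^sup>2)"
  have Rnn: "x \<in> space M \<Longrightarrow> 0 \<le> R x" for x using Zb[of x] unfolding R_def by linarith
  have U2fin: "(\<integral>\<^sup>+x. ennreal ((norm (U x))\<^sup>2) \<partial>M) < \<infinity>"
  proof -
    have "(\<integral>\<^sup>+x. ennreal ((norm (U x))\<^sup>2) \<partial>M)
        = (\<integral>\<^sup>+x. 1 * nn_cond_exp M G (\<lambda>x. ennreal ((norm (U x))\<^sup>2)) x \<partial>M)"
      using nn_cond_exp_intg[of "\<lambda>_. 1" "\<lambda>x. ennreal ((norm (U x))\<^sup>2)"] by simp
    also have "\<dots> \<le> (\<integral>\<^sup>+x. ennreal (\<sigma>\<^sup>2) \<partial>M)"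
      using Uv by (intro nn_integral_mono_AE) auto
    also have "\<dots> = ennreal (\<sigma>\<^sup>2)" by (simp add: emeasure_space_1)
    finally show ?thesis by (simp add: le_less_trans)
  qed
  have U2i: "integrable M (\<lambda>x. (norm (U x))\<^sup>2)"
    by (rule integrableI_bounded) (use U2fin in auto)
  have i1: "integrable M (\<lambda>x. w x * P x)"
    by (rule integrable_const_bound[where B=1]) (auto intro!: AE_I2 simp: abs_mult wP wpos less_imp_le)
  have i2: "integrable M (\<lambda>x. (w x *\<^sub>R D x) \<bullet> U x)"
  proof (rule Bochner_Integration.integrable_bound[OF integrable_norm[OF Ui]])
    show "AE x in M. norm ((w x *\<^sub>R D x) \<bullet> U x) \<le> norm (norm (U x))"
    proof (intro AE_I2)
      fix x
      have "\<bar>(w x *\<^sub>R D x) \<bullet> U x\<bar> \<le> norm (w x *\<^sub>R D x) * norm (U x)" by (rule Cauchy_Schwarz_ineq2)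
      also have "\<dots> \<le> 1 * norm (U x)" using wD[of x] wpos[of x]
        by (intro mult_right_mono) auto
      finally show "norm ((w x *\<^sub>R D x) \<bullet> U x) \<le> norm (norm (U x))" by simp
    qed
  qed measurable
  have i3: "integrable M (\<lambda>x. (w x * K) * (norm (U x))\<^sup>2)"
  proof (rule Bochner_Integration.integrable_bound[OF integrable_mult_right[OF U2i, of K]])
    show "AE x in M. norm ((w x * K) * (norm (U x))\<^sup>2) \<le> norm (K * (norm (U x))\<^sup>2)"
    proof (intro AE_I2)
      fix x
      have "\<bar>w x\<bar> * K \<le> 1 * K" using wpos[of x] w1[of x] K by (intro mult_right_mono) auto
      then have "\<bar>w x\<bar> * K * (norm (U x))\<^sup>2 \<le> K * (norm (U x))\<^sup>2"
        by (intro mult_right_mono) auto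
      then show "norm ((w x * K) * (norm (U x))\<^sup>2) \<le> norm (K * (norm (U x))\<^sup>2)"
        using K by (simp add: abs_mult)
    qed
  qed measurable
  define inn where "inn = (\<lambda>x. (w x *\<^sub>R D x) \<bullet> U x)"
  define q where "q = (\<lambda>x. (w x * K) * (norm (U x))\<^sup>2)"
  have wReq: "(\<lambda>x. w x * R x) = (\<lambda>x. (w x * P x + inn x) + q x)"
    by (auto simp: R_def inn_def q_def algebra_simps)
  have i12: "integrable M (\<lambda>x. w x * P x + inn x)" using i1 i2 unfolding inn_def by auto
  have iwR: "integrable M (\<lambda>x. w x * R x)" unfolding wReq using i12 i3 unfolding q_def by auto
  have e1: "AE x in M. real_cond_exp M G (\<lambda>x. w x * R x) x
      = real_cond_exp M G (\<lambda>x. w x * P x + inn x) x + real_cond_exp M G q x"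
    unfolding wReq by (rule real_cond_exp_add) (use i12 i3 q_def in auto)
  have e2: "AE x in M. real_cond_exp M G (\<lambda>x. w x * P x + inn x) x
      = real_cond_exp M G (\<lambda>x. w x * P x) x + real_cond_exp M G inn x"
    by (rule real_cond_exp_add) (use i1 i2 inn_def in auto)
  have e3: "AE x in M. real_cond_exp M G (\<lambda>x. w x * P x) x = w x * P x"
    by (rule real_cond_exp_F_meas) (use i1 in auto)
  have innsum: "inn = (\<lambda>x. \<Sum>b\<in>Basis. ((w x *\<^sub>R D x) \<bullet> b) * (U x \<bullet> b))"
    unfolding inn_def by (rule ext) (rule euclidean_inner)
  have ib: "integrable M (\<lambda>x. ((w x *\<^sub>R D x) \<bullet> b) * (U x \<bullet> b))" if b: "b \<in> Basis" for b
  proof (rule Bochner_Integration.integrable_bound[OF integrable_norm[OF Ui]])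
    show "AE x in M. norm (((w x *\<^sub>R D x) \<bullet> b) * (U x \<bullet> b)) \<le> norm (norm (U x))"
    proof (intro AE_I2)
      fix x
      have "\<bar>(w x *\<^sub>R D x) \<bullet> b\<bar> \<le> 1"
        using Basis_le_norm[OF b, of "w x *\<^sub>R D x"] wD[of x] wpos[of x] by auto
      moreover have "\<bar>U x \<bullet> b\<bar> \<le> norm (U x)" using Basis_le_norm[OF b] by auto
      ultimately have "\<bar>(w x *\<^sub>R D x) \<bullet> b\<bar> * \<bar>U x \<bullet> b\<bar> \<le> 1 * norm (U x)"
        by (intro mult_mono) auto
      then show "norm (((w x *\<^sub>R D x) \<bullet> b) * (U x \<bullet> b)) \<le> norm (norm (U x))" by (simp add: abs_mult)
    qed
  qed measurable
  have e4: "AE x in M. real_cond_exp M G inn x = 0"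
  proof -
    define f where "f = (\<lambda>b x. if b \<in> Basis then ((w x *\<^sub>R D x) \<bullet> b) * (U x \<bullet> b) else 0)"
    have fi: "integrable M (f b)" for b using ib[of b] unfolding f_def by (cases "b \<in> Basis") auto
    have inn2: "inn = (\<lambda>x. \<Sum>b\<in>Basis. f b x)" unfolding innsum f_def by auto
    have s: "AE x in M. real_cond_exp M G inn x = (\<Sum>b\<in>Basis. real_cond_exp M G (f b) x)"
      unfolding inn2 by (rule real_cond_exp_sum) (rule fi)
    have m: "\<forall>b\<in>Basis. AE x in M. real_cond_exp M G (f b) x = ((w x *\<^sub>R D x) \<bullet> b) * real_cond_exp M G (\<lambda>x. U x \<bullet> b) x"
    proof
      fix b :: 'a assume b: "b \<in> Basis"
      have "f b = (\<lambda>x. ((w x *\<^sub>R D x) \<bullet> b) * (U x \<bullet> b))" using b unfolding f_def by auto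
      then show "AE x in M. real_cond_exp M G (f b) x = ((w x *\<^sub>R D x) \<bullet> b) * real_cond_exp M G (\<lambda>x. U x \<bullet> b) x"
        using real_cond_exp_mult[of "\<lambda>x. (w x *\<^sub>R D x) \<bullet> b" "\<lambda>x. U x \<bullet> b"] ib[OF b] by auto
    qed
    have m': "AE x in M. \<forall>b\<in>Basis. real_cond_exp M G (f b) x = ((w x *\<^sub>R D x) \<bullet> b) * real_cond_exp M G (\<lambda>x. U x \<bullet> b) x"
      by (rule eventually_ball_finite) (use m in auto)
    have c': "AE x in M. \<forall>b\<in>Basis. real_cond_exp M G (\<lambda>x. U x \<bullet> b) x = 0"
      by (rule eventually_ball_finite) (use Uc in auto)
    show ?thesis using s m' c' by eventually_elim auto
  qed
  have e5: "AE x in M. real_cond_exp M G q x = (w x * K) * real_cond_exp M G (\<lambda>x. (norm (U x))\<^sup>2) x"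
    unfolding q_def by (rule real_cond_exp_mult) (use i3 in auto)
  have e6: "AE x in M. real_cond_exp M G (\<lambda>x. (norm (U x))\<^sup>2) x \<le> \<sigma>\<^sup>2"
  proof -
    have "AE x in M. nn_cond_exp M G (\<lambda>x. ennreal ((norm (U x))\<^sup>2)) x = ennreal (real_cond_exp M G (\<lambda>x. (norm (U x))\<^sup>2) x)"
      by (rule nn_real_cond) (use U2i sigma_finite_subalgebra_axioms in auto)
    then show ?thesis using Uv by eventually_elim (auto simp: ennreal_le_iff)
  qed
  have rle: "AE x in M. real_cond_exp M G (\<lambda>x. w x * R x) x \<le> w x * (P x + K * \<sigma>\<^sup>2)"
    using e1 e2 e3 e4 e5 e6
  proof eventually_elim
    case (elim x)
    have "w x * K * real_cond_exp M G (\<lambda>x. (norm (U x))\<^sup>2) x \<le> w x * K * \<sigma>\<^sup>2"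
      using elim(6) wpos[of x] K by (intro mult_left_mono) auto
    then show ?case using elim by (simp add: algebra_simps)
  qed
  have n1: "AE x in M. nn_cond_exp M G (\<lambda>x. ennreal (Z x)) x \<le> nn_cond_exp M G (\<lambda>x. ennreal (R x)) x"
  proof (rule nn_cond_exp_mono)
    show "AE x in M. ennreal (Z x) \<le> ennreal (R x)"
      by (intro AE_I2 ennreal_leI) (use Zb in \<open>auto simp: R_def\<close>)
  qed (auto simp: R_def)
  have n2: "AE x in M. ennreal (w x) * nn_cond_exp M G (\<lambda>x. ennreal (R x)) x
        = nn_cond_exp M G (\<lambda>x. ennreal (w x) * ennreal (R x)) x"
    by (rule nn_cond_exp_prod) (auto simp: R_def)
  have n3: "AE x in M. nn_cond_exp M G (\<lambda>x. ennreal (w x) * ennreal (R x)) x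
        = nn_cond_exp M G (\<lambda>x. ennreal (w x * R x)) x"
  proof (rule nn_cond_exp_cong)
    show "AE x in M. ennreal (w x) * ennreal (R x) = ennreal (w x * R x)"
      by (intro AE_I2) (simp add: ennreal_mult' wpos less_imp_le)
  qed (auto simp: R_def)
  have n4: "AE x in M. nn_cond_exp M G (\<lambda>x. ennreal (w x * R x)) x
        = ennreal (real_cond_exp M G (\<lambda>x. w x * R x) x)"
    by (rule nn_real_cond) (use iwR sigma_finite_subalgebra_axioms wpos Rnn in \<open>auto intro: mult_nonneg_nonneg less_imp_le\<close>)
  show ?thesis using n1 n2 n3 n4 rle
  proof eventually_elim
    case (elim x)
    have "ennreal (w x) * nn_cond_exp M G (\<lambda>x. ennreal (Z x)) x
        \<le> ennreal (w x) * nn_cond_exp M G (\<lambda>x. ennreal (R x)) x"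
      using elim(1) by (rule mult_left_mono) simp
    also have "\<dots> = ennreal (real_cond_exp M G (\<lambda>x. w x * R x) x)" using elim by simp
    also have "\<dots> \<le> ennreal (w x * (P x + K * \<sigma>\<^sup>2))" using elim(5) by (rule ennreal_leI)
    also have "\<dots> \<le> ennreal (w x) * ennreal (P x + K * \<sigma>\<^sup>2)"
    proof (cases "0 \<le> P x + K * \<sigma>\<^sup>2")
      case True then show ?thesis using wpos[of x] by (simp add: ennreal_mult)
    next
      case False
      then have "w x * (P x + K * \<sigma>\<^sup>2) < 0" using wpos[of x] by (simp add: mult_pos_neg)
      then show ?thesis by (simp add: ennreal_lt_0)
    qed
    finally show ?case using wpos[of x] by (subst (asm) ennreal_mult_le_mult_iff) auto
  qed
qed

lemma abs_le_eps: fixes c r eps :: real assumes "eps > 0" shows "c * r \<le> eps * r\<^sup>2 + c\<^sup>2 / (4 * eps)"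
proof -
  have "eps * r\<^sup>2 + c\<^sup>2 / (4 * eps) - c * r = (2 * eps * r - c)\<^sup>2 / (4 * eps)"
    using assms by (simp add: field_simps power2_eq_square)
  moreover have "(2 * eps * r - c)\<^sup>2 / (4 * eps) \<ge> 0" using assms by simp
  ultimately show ?thesis by linarith
qed

lemma vi_shift:
  fixes f b e :: "'a::real_inner"
  assumes vi: "inner f (b + e) \<ge> \<mu> * (norm (b + e))\<^sup>2 - lam"
    and fb: "norm f \<le> A + B * norm b" and A: "A \<ge> 0" and B: "B \<ge> 0" and mu: "\<mu> > 0" and eps: "eps > 0"
  shows "inner f b \<ge> (\<mu> - eps) * (norm b)\<^sup>2 - (lam + A * norm e + (2 * \<mu> + B)\<^sup>2 * (norm e)\<^sup>2 / (4 * eps))"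
proof -
  have i1: "(norm (b + e))\<^sup>2 \<ge> (norm b)\<^sup>2 - 2 * (norm b * norm e)"
  proof -
    have "(norm (b + e))\<^sup>2 = (norm b)\<^sup>2 + 2 * inner b e + (norm e)\<^sup>2"
      by (simp add: power2_norm_eq_inner inner_add_left inner_add_right inner_commute)
    moreover have "inner b e \<ge> - (norm b * norm e)"
      using Cauchy_Schwarz_ineq2[of b e] by linarith
    moreover have "(norm e)\<^sup>2 \<ge> 0" by simp
    ultimately show ?thesis by linarith
  qed
  have i2: "inner f e \<le> (A + B * norm b) * norm e"
  proof -
    have "inner f e \<le> norm f * norm e" by (rule norm_cauchy_schwarz)
    also have "\<dots> \<le> (A + B * norm b) * norm e" using fb by (intro mult_right_mono) auto
    finally show ?thesis .
  qed
  have i3: "((2 * \<mu> + B) * norm e) * norm b \<le> eps * (norm b)\<^sup>2 + ((2 * \<mu> + B) * norm e)\<^sup>2 / (4 * eps)"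
    by (rule abs_le_eps[OF eps])
  have i3': "2 * \<mu> * (norm b * norm e) + B * (norm b * norm e) \<le> eps * (norm b)\<^sup>2 + (2 * \<mu> + B)\<^sup>2 * (norm e)\<^sup>2 / (4 * eps)"
  proof -
    have "((2 * \<mu> + B) * norm e)\<^sup>2 = (2 * \<mu> + B)\<^sup>2 * (norm e)\<^sup>2" by (simp add: power_mult_distrib)
    then show ?thesis using i3 by (simp add: algebra_simps)
  qed
  have i2': "inner f e \<le> A * norm e + B * (norm b * norm e)" using i2 by (simp add: algebra_simps)
  have i4: "\<mu> * (norm (b + e))\<^sup>2 \<ge> \<mu> * (norm b)\<^sup>2 - 2 * \<mu> * (norm b * norm e)"
  proof -
    have "\<mu> * (norm (b + e))\<^sup>2 \<ge> \<mu> * ((norm b)\<^sup>2 - 2 * (norm b * norm e))"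
      using i1 mu by (intro mult_left_mono) auto
    then show ?thesis by (simp add: algebra_simps)
  qed
  have "inner f b = inner f (b + e) - inner f e" by (simp add: inner_add_right)
  then show ?thesis using vi i2' i3' i4 by (simp add: algebra_simps)
qed

lemma sq_split:
  fixes v w :: "'a::real_inner" assumes d: "d > 0"
  shows "(norm (v + w))\<^sup>2 \<le> (1 + d) * (norm v)\<^sup>2 + (1 + 1 / d) * (norm w)\<^sup>2"
proof -
  have "(norm (v + w))\<^sup>2 \<le> (norm v + norm w)\<^sup>2"
    by (intro power_mono norm_triangle_ineq) auto
  also have "\<dots> = (norm v)\<^sup>2 + 2 * (norm v * norm w) + (norm w)\<^sup>2" by (simp add: power2_eq_square algebra_simps)
  also have "2 * (norm v * norm w) \<le> d * (norm v)\<^sup>2 + (norm w)\<^sup>2 / d"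
  proof -
    have "d * (norm v)\<^sup>2 + (norm w)\<^sup>2 / d - 2 * (norm v * norm w) = (d * norm v - norm w)\<^sup>2 / d"
      using d by (simp add: field_simps power2_eq_square)
    moreover have "(d * norm v - norm w)\<^sup>2 / d \<ge> 0" using d by simp
    ultimately show ?thesis by linarith
  qed
  finally show ?thesis by (simp add: algebra_simps)
qed

lemma sgda_pt:
  fixes b f u :: "'a::real_inner"
  assumes vi: "inner f b \<ge> m * (norm b)\<^sup>2 - l"
    and fb: "norm f \<le> G * (n + norm b)" and G: "G \<ge> 0" and n: "n \<ge> 0" and g: "\<gamma> > 0"
  shows "(norm (b - \<gamma> *\<^sub>R (f + u)))\<^sup>2 \<le> (1 - 2 * \<gamma> * m + 25/16 * \<gamma>\<^sup>2 * G\<^sup>2) * (norm b)\<^sup>2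
          + 2 * \<gamma> * l + 25/4 * \<gamma>\<^sup>2 * G\<^sup>2 * n\<^sup>2 + inner (- (2 * \<gamma>) *\<^sub>R b) u + 5 * \<gamma>\<^sup>2 * (norm u)\<^sup>2"
proof -
  have e: "(norm (b - \<gamma> *\<^sub>R (f + u)))\<^sup>2 = (norm b)\<^sup>2 - 2 * \<gamma> * inner f b - 2 * \<gamma> * inner b u + \<gamma>\<^sup>2 * (norm (f + u))\<^sup>2"
    by (simp only: power2_norm_eq_inner)
      (simp add: inner_add_left inner_add_right inner_diff_left inner_diff_right
        inner_commute algebra_simps power2_eq_square)
  have fu: "(norm (f + u))\<^sup>2 \<le> 5/4 * (norm f)\<^sup>2 + 5 * (norm u)\<^sup>2"
    using sq_split[of "1/4" f u] by simp
  have f2: "(norm f)\<^sup>2 \<le> G\<^sup>2 * (5/4 * (norm b)\<^sup>2 + 5 * n\<^sup>2)"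
  proof -
    have "(norm f)\<^sup>2 \<le> (G * (n + norm b))\<^sup>2" using fb by (intro power_mono) auto
    also have "\<dots> = G\<^sup>2 * (norm b + n)\<^sup>2" by (simp add: power_mult_distrib add.commute)
    also have "(norm b + n)\<^sup>2 \<le> 5/4 * (norm b)\<^sup>2 + 5 * n\<^sup>2"
      using sq_split[of "1/4" "norm b" n] n by simp
    then have "G\<^sup>2 * (norm b + n)\<^sup>2 \<le> G\<^sup>2 * (5/4 * (norm b)\<^sup>2 + 5 * n\<^sup>2)" by (intro mult_left_mono) auto
    finally show ?thesis .
  qed
  have "\<gamma>\<^sup>2 * (norm (f + u))\<^sup>2 \<le> \<gamma>\<^sup>2 * (5/4 * (G\<^sup>2 * (5/4 * (norm b)\<^sup>2 + 5 * n\<^sup>2)) + 5 * (norm u)\<^sup>2)"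
    using fu f2 by (intro mult_left_mono) auto
  moreover have "- 2 * \<gamma> * inner f b \<le> - 2 * \<gamma> * (m * (norm b)\<^sup>2 - l)" using vi g by simp
  ultimately show ?thesis unfolding e by (simp add: algebra_simps)
qed

lemma seg_det:
  fixes F :: "'a::real_inner \<Rightarrow> 'a"
  assumes vi: "\<And>z. inner (F z) (z - xs) \<ge> m * (norm (z - xs))\<^sup>2 - l"
    and lip0: "\<And>z. norm (F z) \<le> L * norm (z - xs)"
    and lip: "\<And>z w. norm (F z - F w) \<le> L * norm (z - w)"
    and m: "m > 0" and g: "\<gamma> > 0" and L: "L \<ge> 0" and gL: "\<gamma> * L \<le> 1" and a: "\<alpha> > 0" "\<alpha> \<le> 1"
  shows "(norm (x - xs - (\<alpha> * \<gamma>) *\<^sub>R F (x - \<gamma> *\<^sub>R F x)))\<^sup>2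
          \<le> (1 - 2 * \<alpha> * \<gamma> * m * (1 - \<gamma> * L)\<^sup>2) * (norm (x - xs))\<^sup>2 + 2 * \<alpha> * \<gamma> * l"
proof -
  define b where "b = x - xs"
  define fx where "fx = F x"
  define y where "y = x - \<gamma> *\<^sub>R fx"
  define fy where "fy = F y"
  have bdec: "b = (y - xs) + \<gamma> *\<^sub>R fx" unfolding b_def y_def by simp
  have e: "(norm (b - (\<alpha> * \<gamma>) *\<^sub>R fy))\<^sup>2 = (norm b)\<^sup>2 - 2 * (\<alpha> * \<gamma>) * inner fy b + (\<alpha> * \<gamma>)\<^sup>2 * (norm fy)\<^sup>2"
    by (simp only: power2_norm_eq_inner)
      (simp add: inner_add_left inner_add_right inner_diff_left inner_diff_right
        inner_commute algebra_simps power2_eq_square)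
  have e2: "inner fy b = inner fy (y - xs) + \<gamma> * inner fy fx"
    unfolding bdec by (simp add: inner_add_right)
  have e3: "2 * inner fy fx = (norm fy)\<^sup>2 + (norm fx)\<^sup>2 - (norm (fy - fx))\<^sup>2"
    by (simp only: power2_norm_eq_inner)
      (simp add: inner_diff_left inner_diff_right inner_commute algebra_simps)
  have d1: "norm (fy - fx) \<le> L * (\<gamma> * norm fx)"
    using lip[of y x] unfolding fy_def fx_def y_def by (simp add: g less_imp_le)
  have d2: "(norm (fy - fx))\<^sup>2 \<le> (norm fx)\<^sup>2"
  proof -
    have "(\<gamma> * L) * norm fx \<le> 1 * norm fx" using gL by (intro mult_right_mono) auto
    then have "L * (\<gamma> * norm fx) \<le> 1 * norm fx" by (simp add: algebra_simps)
    then show ?thesis using d1 by (intro power_mono) auto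
  qed
  have c1: "\<gamma> * inner fy fx \<ge> \<gamma> / 2 * (norm fy)\<^sup>2"
  proof -
    have "inner fy fx \<ge> (norm fy)\<^sup>2 / 2" using e3 d2 by linarith
    then show ?thesis using g by (simp add: mult_left_mono[of _ _ \<gamma>] less_imp_le field_simps)
  qed
  have viy: "inner fy (y - xs) \<ge> m * (norm (y - xs))\<^sup>2 - l" unfolding fy_def by (rule vi)
  have ny: "norm (y - xs) \<ge> (1 - \<gamma> * L) * norm b"
  proof -
    have "norm (y - xs) = norm (b - \<gamma> *\<^sub>R fx)" unfolding bdec by simp
    also have "\<dots> \<ge> norm b - norm (\<gamma> *\<^sub>R fx)" by (rule norm_triangle_ineq2)
    moreover have "norm (\<gamma> *\<^sub>R fx) \<le> \<gamma> * (L * norm b)"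
      using lip0[of x] g unfolding fx_def b_def by (simp add: mult_left_mono)
    ultimately show ?thesis by (simp add: algebra_simps)
  qed
  have ny2: "(norm (y - xs))\<^sup>2 \<ge> (1 - \<gamma> * L)\<^sup>2 * (norm b)\<^sup>2"
  proof -
    have "((1 - \<gamma> * L) * norm b)\<^sup>2 \<le> (norm (y - xs))\<^sup>2" using ny gL by (intro power_mono) auto
    then show ?thesis by (simp add: power_mult_distrib)
  qed
  have aa: "(\<alpha> * \<gamma>)\<^sup>2 * (norm fy)\<^sup>2 \<le> \<alpha> * \<gamma> * \<gamma> * (norm fy)\<^sup>2"
  proof -
    have "\<alpha> * \<alpha> \<le> \<alpha> * 1" using a by (intro mult_left_mono) auto
    then have "(\<alpha> * \<alpha>) * (\<gamma> * \<gamma>) \<le> (\<alpha> * 1) * (\<gamma> * \<gamma>)" by (intro mult_right_mono) auto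
    then have "(\<alpha> * \<gamma>)\<^sup>2 \<le> \<alpha> * \<gamma> * \<gamma>" by (simp add: power2_eq_square algebra_simps)
    then show ?thesis by (intro mult_right_mono) auto
  qed
  have "(norm (b - (\<alpha> * \<gamma>) *\<^sub>R fy))\<^sup>2 \<le> (norm b)\<^sup>2 - 2 * (\<alpha> * \<gamma>) * (m * (norm (y - xs))\<^sup>2 - l)"
  proof -
    have "2 * (\<alpha> * \<gamma>) * (m * (norm (y - xs))\<^sup>2 - l + \<gamma> / 2 * (norm fy)\<^sup>2) \<le> 2 * (\<alpha> * \<gamma>) * inner fy b"
    proof -
      have "m * (norm (y - xs))\<^sup>2 - l + \<gamma> / 2 * (norm fy)\<^sup>2 \<le> inner fy b" using viy c1 e2 by linarith
      then show ?thesis using a g by (intro mult_left_mono) auto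
    qed
    then show ?thesis unfolding e using aa by (simp add: algebra_simps)
  qed
  also have "\<dots> \<le> (norm b)\<^sup>2 - 2 * (\<alpha> * \<gamma>) * (m * ((1 - \<gamma> * L)\<^sup>2 * (norm b)\<^sup>2) - l)"
    using ny2 a g m by (simp add: mult_left_mono)
  finally show ?thesis unfolding b_def fy_def y_def fx_def by (simp add: algebra_simps)
qed

lemma sfs_lemma: assumes "prob_space M" "subalgebra M G" shows "sigma_finite_subalgebra M G"
proof -
  interpret prob_space M by fact
  interpret finite_measure_subalgebra M G by unfold_locales fact
  show ?thesis by (rule sigma_finite_subalgebra_axioms)
qed

lemma sq_expand:
  fixes v u :: "'a::real_inner"
  shows "(norm (v - c *\<^sub>R u))\<^sup>2 = (norm v)\<^sup>2 + inner (- (2 * c) *\<^sub>R v) u + c\<^sup>2 * (norm u)\<^sup>2"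
  by (simp only: power2_norm_eq_inner)
    (simp add: inner_diff_left inner_diff_right inner_commute algebra_simps power2_eq_square)

theorem corollary1:
  fixes M :: "'w measure"
    and \<F> :: "nat \<Rightarrow> 'w measure"
    and F :: "'a::euclidean_space \<Rightarrow> 'a"
    and X :: "nat \<Rightarrow> 'w \<Rightarrow> 'a"
    and U :: "nat \<Rightarrow> 'w \<Rightarrow> 'a \<Rightarrow> 'a"
    and \<sigma> R lam \<mu> :: real
    and xs0 :: 'a
  assumes prob: "prob_space M"
    and filt_sub: "\<And>t. subalgebra M (\<F> t)"
    and filt_mono: "\<And>s t. s \<le> t \<Longrightarrow> sets (\<F> s) \<subseteq> sets (\<F> t)"
    and adapted: "\<And>t. X t \<in> borel_measurable (\<F> t)"
    and sigma_pos: "\<sigma> > 0"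
    and noise_meas: "\<And>t. (\<lambda>\<omega>. U t \<omega> (X t \<omega>)) \<in> borel_measurable (\<F> (Suc t))"
    and noise_nonmeas: "\<And>t. (\<lambda>\<omega>. U t \<omega> (X t \<omega>)) \<notin> borel_measurable (\<F> t)"
    and noise: "\<And>t. oracle_noise M (\<F> t) (U t) \<sigma>"
    and xs0_sol: "F xs0 = 0"
    and xs0_R: "norm xs0 \<le> R"
    and lam: "lam \<ge> 0"
    and mu: "\<mu> > 0"
    and var_ineq: "\<And>x. inner (F x) (x - xs0) \<ge> \<mu> * (norm (x - xs0))\<^sup>2 - lam"
    and alg:
      "(\<exists>G \<gamma>::real.
          (\<forall>x. norm (F x) \<le> G * (1 + norm x)) \<and> 0 < \<gamma> \<and> \<gamma> < \<mu> / G\<^sup>2 \<and>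
          (\<forall>t \<omega>. X (Suc t) \<omega> = X t \<omega> - \<gamma> *\<^sub>R (F (X t \<omega>) + U t \<omega> (X t \<omega>))))
       \<or>
       (\<exists>(L::real) (\<gamma>::real) (\<alpha>::real) (Uh :: nat \<Rightarrow> 'w \<Rightarrow> 'a \<Rightarrow> 'a)
          (Xh :: nat \<Rightarrow> 'w \<Rightarrow> 'a) (\<H> :: nat \<Rightarrow> 'w measure).
          L-lipschitz_on UNIV F \<and> 0 < \<gamma> \<and> \<gamma> < 1 / (2 * \<mu> + sqrt 3 * L) \<and>
          0 < \<alpha> \<and> \<alpha> < 1 \<and>
          (\<forall>t \<omega>. Xh t \<omega> = X t \<omega> - \<gamma> *\<^sub>R (F (X t \<omega>) + U t \<omega> (X t \<omega>))) \<and>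
          (\<forall>t \<omega>. X (Suc t) \<omega> =
                   X t \<omega> - (\<alpha> * \<gamma>) *\<^sub>R (F (Xh t \<omega>) + Uh t \<omega> (Xh t \<omega>))) \<and>
          (\<forall>t. subalgebra M (\<H> t) \<and> sets (\<F> t) \<subseteq> sets (\<H> t) \<and>
               Xh t \<in> borel_measurable (\<H> t) \<and> oracle_noise M (\<H> t) (Uh t) \<sigma>))"
  shows "\<forall>xs. F xs = 0 \<longrightarrow>
           (\<exists>c1 c2::real. 0 < c1 \<and> c1 < 1 \<and> 0 < c2 \<and>
              (\<forall>t. AE \<omega> in M.
                 nn_cond_exp M (\<F> t) (\<lambda>\<omega>. ennreal (lyapV (X (Suc t) \<omega>) xs)) \<omega>
                   \<le> ennreal (c1 * lyapV (X t \<omega>) xs + c2)))"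
proof (intro allI impI)
  fix xs assume xs: "F xs = 0"
  define e where "e = xs - xs0"
  have XM[measurable]: "X t \<in> borel_measurable M" for t
    by (rule measurable_from_subalg[OF filt_sub adapted])
  have vi_e: "inner (F x) ((x - xs) + e) \<ge> \<mu> * (norm ((x - xs) + e))\<^sup>2 - lam" for x
    using var_ineq[of x] unfolding e_def by (simp add: algebra_simps)
  have noiseD: "(\<lambda>\<omega>. U t \<omega> (X t \<omega>)) \<in> borel_measurable M \<and> integrable M (\<lambda>\<omega>. U t \<omega> (X t \<omega>)) \<and>
        (\<forall>b\<in>Basis. AE \<omega> in M. real_cond_exp M (\<F> t) (\<lambda>\<omega>. U t \<omega> (X t \<omega>) \<bullet> b) \<omega> = 0) \<and>
        (AE \<omega> in M. nn_cond_exp M (\<F> t) (\<lambda>\<omega>. ennreal ((norm (U t \<omega> (X t \<omega>)))\<^sup>2)) \<omega> \<le> ennreal (\<sigma>\<^sup>2))" for t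
    using noise[of t] adapted[of t] unfolding oracle_noise_def by blast
  from alg show "\<exists>c1 c2::real. 0 < c1 \<and> c1 < 1 \<and> 0 < c2 \<and>
              (\<forall>t. AE \<omega> in M.
                 nn_cond_exp M (\<F> t) (\<lambda>\<omega>. ennreal (lyapV (X (Suc t) \<omega>) xs)) \<omega>
                   \<le> ennreal (c1 * lyapV (X t \<omega>) xs + c2))"
  proof (elim disjE exE conjE)
    fix G \<gamma> :: real
    assume gr: "\<forall>x. norm (F x) \<le> G * (1 + norm x)" and g: "0 < \<gamma>" and glt: "\<gamma> < \<mu> / G\<^sup>2"
      and step: "\<forall>t \<omega>. X (Suc t) \<omega> = X t \<omega> - \<gamma> *\<^sub>R (F (X t \<omega>) + U t \<omega> (X t \<omega>))"
    have G0: "G \<ge> 0" using gr[rule_format, of 0] by (metis norm_ge_zero norm_zero add_0_right mult_1_right order_trans)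
    have Gne: "G \<noteq> 0" using glt g by auto
    then have Gp: "G > 0" using G0 by auto
    have gG: "\<gamma> * G\<^sup>2 < \<mu>" using glt Gp by (simp add: field_simps)
    define eps where "eps = (\<mu> - \<gamma> * G\<^sup>2) / 2"
    define m where "m = \<mu> - eps"
    define n where "n = 1 + norm xs"
    define l where "l = lam + (G * n) * norm e + (2 * \<mu> + G)\<^sup>2 * (norm e)\<^sup>2 / (4 * eps)"
    have eps: "eps > 0" unfolding eps_def using gG by simp
    have l0: "l \<ge> 0" unfolding l_def using lam eps G0 by (simp add: n_def)
    have n0: "n \<ge> 0" unfolding n_def by simp
    have vi': "inner (F x) (x - xs) \<ge> m * (norm (x - xs))\<^sup>2 - l" for x
    proof -
      have "norm (F x) \<le> G * (1 + norm x)" using gr by blast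
      also have "\<dots> \<le> G * n + G * norm (x - xs)"
      proof -
        have "norm x \<le> norm xs + norm (x - xs)" by (metis add.commute diff_add_cancel norm_triangle_ineq)
        then have "G * norm x \<le> G * (norm xs + norm (x - xs))" using G0 by (rule mult_left_mono)
        then show ?thesis unfolding n_def by (simp add: algebra_simps)
      qed
      finally have fb: "norm (F x) \<le> G * n + G * norm (x - xs)" .
      show ?thesis using vi_shift[OF vi_e fb _ G0 mu eps] G0 n0 unfolding m_def l_def by simp
    qed
    define a where "a = 1 - 2 * \<gamma> * m + 25/16 * \<gamma>\<^sup>2 * G\<^sup>2"
    define c1 where "c1 = max a (1/2)"
    define c2 where "c2 = 2 * \<gamma> * l + 25/4 * \<gamma>\<^sup>2 * G\<^sup>2 * n\<^sup>2 + 1 + 5 * \<gamma>\<^sup>2 * \<sigma>\<^sup>2"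
    have a1: "a < 1"
    proof -
      have "\<gamma> * G\<^sup>2 < m" unfolding m_def eps_def using gG by (simp add: field_simps)
      then have "\<gamma> * (\<gamma> * G\<^sup>2) < \<gamma> * m" using g by simp
      moreover have "\<gamma> * (\<gamma> * G\<^sup>2) > 0" using g Gp by simp
      ultimately show ?thesis unfolding a_def by (simp add: power2_eq_square algebra_simps)
    qed
    have c1: "0 < c1" "c1 < 1" "a \<le> c1" using a1 unfolding c1_def by auto
    have c2: "0 < c2"
    proof -
      have "0 \<le> 2 * \<gamma> * l" using l0 g by simp
      moreover have "0 \<le> 25/4 * \<gamma>\<^sup>2 * G\<^sup>2 * n\<^sup>2" by simp
      moreover have "0 \<le> 5 * \<gamma>\<^sup>2 * \<sigma>\<^sup>2" by simp
      ultimately show ?thesis unfolding c2_def by linarith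
    qed
    show ?thesis
    proof (intro exI conjI allI)
      show "0 < c1" "c1 < 1" "0 < c2" by (fact c1 c2)+
    next
      fix t
      have sub: "subalgebra M (\<F> t)" by (rule filt_sub)
      have XG[measurable]: "X t \<in> borel_measurable (\<F> t)" by (rule adapted)
      have XSM[measurable]: "X (Suc t) \<in> borel_measurable M" by (rule XM)
      have Um: "(\<lambda>\<omega>. U t \<omega> (X t \<omega>)) \<in> borel_measurable M" using noiseD by blast
      have Ui: "integrable M (\<lambda>\<omega>. U t \<omega> (X t \<omega>))" using noiseD by blast
      have Uc: "\<forall>b\<in>Basis. AE \<omega> in M. real_cond_exp M (\<F> t) (\<lambda>\<omega>. U t \<omega> (X t \<omega>) \<bullet> b) \<omega> = 0" using noiseD by blast
      have Uv: "AE \<omega> in M. nn_cond_exp M (\<F> t) (\<lambda>\<omega>. ennreal ((norm (U t \<omega> (X t \<omega>)))\<^sup>2)) \<omega> \<le> ennreal (\<sigma>\<^sup>2)" using noiseD by blast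
      have K: "AE \<omega> in M. nn_cond_exp M (\<F> t) (\<lambda>\<omega>. ennreal (lyapV (X (Suc t) \<omega>) xs)) \<omega>
          \<le> ennreal ((a * (norm (X t \<omega> - xs))\<^sup>2 + 2 * \<gamma> * l + 25/4 * \<gamma>\<^sup>2 * G\<^sup>2 * n\<^sup>2 + 1) + 5 * \<gamma>\<^sup>2 * \<sigma>\<^sup>2)"
      proof (rule key[where U="\<lambda>\<omega>. U t \<omega> (X t \<omega>)" and D="\<lambda>\<omega>. - (2 * \<gamma>) *\<^sub>R (X t \<omega> - xs)"
            and P="\<lambda>\<omega>. a * (norm (X t \<omega> - xs))\<^sup>2 + 2 * \<gamma> * l + 25/4 * \<gamma>\<^sup>2 * G\<^sup>2 * n\<^sup>2 + 1"
            and Z="\<lambda>\<omega>. lyapV (X (Suc t) \<omega>) xs", OF prob sub Um Ui Uc Uv])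
        show "(\<lambda>\<omega>. a * (norm (X t \<omega> - xs))\<^sup>2 + 2 * \<gamma> * l + 25/4 * \<gamma>\<^sup>2 * G\<^sup>2 * n\<^sup>2 + 1) \<in> borel_measurable (\<F> t)"
          by measurable
        show "(\<lambda>\<omega>. - (2 * \<gamma>) *\<^sub>R (X t \<omega> - xs)) \<in> borel_measurable (\<F> t)" by measurable
        show "0 \<le> 5 * \<gamma>\<^sup>2" by simp
        show "(\<lambda>\<omega>. lyapV (X (Suc t) \<omega>) xs) \<in> borel_measurable M" unfolding lyapV_def by measurable
        fix \<omega> assume "\<omega> \<in> space M"
        have fb: "norm (F (X t \<omega>)) \<le> G * (n + norm (X t \<omega> - xs))"
        proof -
          have "norm (F (X t \<omega>)) \<le> G * (1 + norm (X t \<omega>))" using gr by blast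
          also have "norm (X t \<omega>) \<le> norm xs + norm (X t \<omega> - xs)" by (metis add.commute diff_add_cancel norm_triangle_ineq)
          then have "G * (1 + norm (X t \<omega>)) \<le> G * (n + norm (X t \<omega> - xs))" unfolding n_def using G0 by (intro mult_left_mono) auto
          finally show ?thesis .
        qed
        have eq: "X (Suc t) \<omega> - xs = (X t \<omega> - xs) - \<gamma> *\<^sub>R (F (X t \<omega>) + U t \<omega> (X t \<omega>))" using step by (simp add: algebra_simps)
        have "(norm (X (Suc t) \<omega> - xs))\<^sup>2 \<le> a * (norm (X t \<omega> - xs))\<^sup>2
          + 2 * \<gamma> * l + 25/4 * \<gamma>\<^sup>2 * G\<^sup>2 * n\<^sup>2 + inner (- (2 * \<gamma>) *\<^sub>R (X t \<omega> - xs)) (U t \<omega> (X t \<omega>)) + 5 * \<gamma>\<^sup>2 * (norm (U t \<omega> (X t \<omega>)))\<^sup>2"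
          unfolding eq using sgda_pt[OF vi' fb G0 n0 g, of "U t \<omega> (X t \<omega>)"] unfolding a_def by simp
        then show "0 \<le> lyapV (X (Suc t) \<omega>) xs \<and> lyapV (X (Suc t) \<omega>) xs \<le>
          a * (norm (X t \<omega> - xs))\<^sup>2 + 2 * \<gamma> * l + 25/4 * \<gamma>\<^sup>2 * G\<^sup>2 * n\<^sup>2 + 1 + inner (- (2 * \<gamma>) *\<^sub>R (X t \<omega> - xs)) (U t \<omega> (X t \<omega>)) + 5 * \<gamma>\<^sup>2 * (norm (U t \<omega> (X t \<omega>)))\<^sup>2"
          unfolding lyapV_def by (simp add: add_nonneg_pos)
      qed
      show "AE \<omega> in M. nn_cond_exp M (\<F> t) (\<lambda>\<omega>. ennreal (lyapV (X (Suc t) \<omega>) xs)) \<omega>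
                   \<le> ennreal (c1 * lyapV (X t \<omega>) xs + c2)"
        using K
      proof eventually_elim
        case (elim \<omega>)
        have "a * (norm (X t \<omega> - xs))\<^sup>2 \<le> c1 * (norm (X t \<omega> - xs))\<^sup>2" using c1 by (intro mult_right_mono) auto
        then have "(a * (norm (X t \<omega> - xs))\<^sup>2 + 2 * \<gamma> * l + 25/4 * \<gamma>\<^sup>2 * G\<^sup>2 * n\<^sup>2 + 1) + 5 * \<gamma>\<^sup>2 * \<sigma>\<^sup>2
            \<le> c1 * lyapV (X t \<omega>) xs + c2" unfolding lyapV_def c2_def using c1 by (simp add: algebra_simps)
        then show ?case using elim order_trans ennreal_leI by blast
      qed
    qed
  next
    fix L \<gamma> \<alpha> :: real and Uh :: "nat \<Rightarrow> 'w \<Rightarrow> 'a \<Rightarrow> 'a" and Xh :: "nat \<Rightarrow> 'w \<Rightarrow> 'a"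
      and H :: "nat \<Rightarrow> 'w measure"
    assume lipF: "L-lipschitz_on UNIV F" and g: "0 < \<gamma>" and glt: "\<gamma> < 1 / (2 * \<mu> + sqrt 3 * L)"
      and a0: "0 < \<alpha>" and a1: "\<alpha> < 1"
      and Xh_def: "\<forall>t \<omega>. Xh t \<omega> = X t \<omega> - \<gamma> *\<^sub>R (F (X t \<omega>) + U t \<omega> (X t \<omega>))"
      and stepS: "\<forall>t \<omega>. X (Suc t) \<omega> = X t \<omega> - (\<alpha> * \<gamma>) *\<^sub>R (F (Xh t \<omega>) + Uh t \<omega> (Xh t \<omega>))"
      and Hprops: "\<forall>t. subalgebra M (H t) \<and> sets (\<F> t) \<subseteq> sets (H t) \<and>
               Xh t \<in> borel_measurable (H t) \<and> oracle_noise M (H t) (Uh t) \<sigma>"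
    have L0: "L \<ge> 0" using lipF by (simp add: lipschitz_on_def)
    have lip: "norm (F z - F w) \<le> L * norm (z - w)" for z w
      using lipF by (simp add: lipschitz_on_def dist_norm)
    have lip0: "norm (F z) \<le> L * norm (z - xs)" for z using lip[of z xs] xs by simp
    have gL: "\<gamma> * L < 1"
    proof -
      have pos: "0 < 2 * \<mu> + sqrt 3 * L" using mu L0 by (simp add: add_pos_nonneg)
      have "\<gamma> * (2 * \<mu> + sqrt 3 * L) < 1" using glt pos by (simp add: field_simps)
      moreover have "\<gamma> * L \<le> \<gamma> * (sqrt 3 * L)"
      proof -
        have "1 * L \<le> sqrt 3 * L" using L0 by (intro mult_right_mono) auto
        then show ?thesis using g by simp
      qed
      moreover have "0 \<le> \<gamma> * (2 * \<mu>)" using g mu by simp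
      ultimately show ?thesis by (simp add: algebra_simps)
    qed
    define eps where "eps = \<mu> / 2"
    define m where "m = \<mu> - eps"
    define l where "l = lam + 0 * norm e + (2 * \<mu> + L)\<^sup>2 * (norm e)\<^sup>2 / (4 * eps)"
    have eps: "eps > 0" unfolding eps_def using mu by simp
    have m0: "m > 0" unfolding m_def eps_def using mu by simp
    have l0: "l \<ge> 0" unfolding l_def using lam eps by simp
    have vi': "inner (F x) (x - xs) \<ge> m * (norm (x - xs))\<^sup>2 - l" for x
    proof -
      have fb: "norm (F x) \<le> 0 + L * norm (x - xs)" using lip0 by simp
      show ?thesis using vi_shift[OF vi_e fb _ L0 mu eps] unfolding m_def l_def by simp
    qed
    define q where "q = 1 - 2 * \<alpha> * \<gamma> * m * (1 - \<gamma> * L)\<^sup>2"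
    define q' where "q' = max q (1/2)"
    define \<delta> where "\<delta> = (1 - q') / 2"
    define c1 where "c1 = (1 + \<delta>) * q'"
    define K2 where "K2 = (1 + 1 / \<delta>) * (\<alpha> * \<gamma> * L * \<gamma>)\<^sup>2"
    define c2 where "c2 = (1 + \<delta>) * (2 * \<alpha> * \<gamma> * l) + 1 + (\<alpha> * \<gamma>)\<^sup>2 * \<sigma>\<^sup>2 + K2 * \<sigma>\<^sup>2"
    have q1: "q < 1"
    proof -
      have "0 < 2 * \<alpha> * \<gamma> * m * (1 - \<gamma> * L)\<^sup>2" using a0 g m0 gL by simp
      then show ?thesis unfolding q_def by simp
    qed
    have q'1: "q' < 1" "1/2 \<le> q'" "q \<le> q'" unfolding q'_def using q1 by auto
    have d0: "\<delta> > 0" unfolding \<delta>_def using q'1 by simp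
    have c1: "0 < c1" "c1 < 1"
    proof -
      show "0 < c1" unfolding c1_def using d0 q'1 by simp
      have "\<delta> * q' < \<delta> * 1" using d0 q'1 by (intro mult_strict_left_mono) auto
      moreover have "c1 = q' + \<delta> * q'" unfolding c1_def by (simp add: algebra_simps)
      moreover have "q' + \<delta> < 1" unfolding \<delta>_def using q'1 by (simp add: field_simps)
      ultimately show "c1 < 1" by linarith
    qed
    have K20: "K2 \<ge> 0" unfolding K2_def using d0 by simp
    have c2: "0 < c2"
    proof -
      have "0 \<le> (1 + \<delta>) * (2 * \<alpha> * \<gamma> * l)" using d0 a0 g l0 by simp
      moreover have "0 \<le> (\<alpha> * \<gamma>)\<^sup>2 * \<sigma>\<^sup>2" by simp
      moreover have "0 \<le> K2 * \<sigma>\<^sup>2" using K20 by simp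
      ultimately show ?thesis unfolding c2_def by linarith
    qed
    show ?thesis
    proof (intro exI conjI allI)
      show "0 < c1" "c1 < 1" "0 < c2" by (fact c1 c2)+
    next
      fix t
      have subH: "subalgebra M (H t)" using Hprops by blast
      have setsFH: "sets (\<F> t) \<subseteq> sets (H t)" using Hprops by blast
      have XhH[measurable]: "Xh t \<in> borel_measurable (H t)" using Hprops by blast
      have onH: "oracle_noise M (H t) (Uh t) \<sigma>" using Hprops by blast
      have subF: "subalgebra M (\<F> t)" by (rule filt_sub)
      have subFH: "subalgebra (H t) (\<F> t)"
        using subH subF setsFH unfolding subalgebra_def by auto
      have XG[measurable]: "X t \<in> borel_measurable (\<F> t)" by (rule adapted)
      have XtH[measurable]: "X t \<in> borel_measurable (H t)" by (rule measurable_from_subalg[OF subFH adapted])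
      have Fb[measurable]: "F \<in> borel_measurable borel"
        by (rule borel_measurable_continuous_onI[OF lipschitz_on_continuous_on[OF lipF]])
      have XSM[measurable]: "X (Suc t) \<in> borel_measurable M" by (rule XM)
      have Um: "(\<lambda>\<omega>. U t \<omega> (X t \<omega>)) \<in> borel_measurable M" using noiseD by blast
      have Ui: "integrable M (\<lambda>\<omega>. U t \<omega> (X t \<omega>))" using noiseD by blast
      have Uc: "\<forall>b\<in>Basis. AE \<omega> in M. real_cond_exp M (\<F> t) (\<lambda>\<omega>. U t \<omega> (X t \<omega>) \<bullet> b) \<omega> = 0" using noiseD by blast
      have Uv: "AE \<omega> in M. nn_cond_exp M (\<F> t) (\<lambda>\<omega>. ennreal ((norm (U t \<omega> (X t \<omega>)))\<^sup>2)) \<omega> \<le> ennreal (\<sigma>\<^sup>2)" using noiseD by blast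
      have noiseH: "(\<lambda>\<omega>. Uh t \<omega> (Xh t \<omega>)) \<in> borel_measurable M \<and> integrable M (\<lambda>\<omega>. Uh t \<omega> (Xh t \<omega>)) \<and>
        (\<forall>b\<in>Basis. AE \<omega> in M. real_cond_exp M (H t) (\<lambda>\<omega>. Uh t \<omega> (Xh t \<omega>) \<bullet> b) \<omega> = 0) \<and>
        (AE \<omega> in M. nn_cond_exp M (H t) (\<lambda>\<omega>. ennreal ((norm (Uh t \<omega> (Xh t \<omega>)))\<^sup>2)) \<omega> \<le> ennreal (\<sigma>\<^sup>2))"
        using onH XhH unfolding oracle_noise_def by blast
      have UhM: "(\<lambda>\<omega>. Uh t \<omega> (Xh t \<omega>)) \<in> borel_measurable M" using noiseH by blast
      have UhI: "integrable M (\<lambda>\<omega>. Uh t \<omega> (Xh t \<omega>))" using noiseH by blast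
      have UhC: "\<forall>b\<in>Basis. AE \<omega> in M. real_cond_exp M (H t) (\<lambda>\<omega>. Uh t \<omega> (Xh t \<omega>) \<bullet> b) \<omega> = 0" using noiseH by blast
      have UhV: "AE \<omega> in M. nn_cond_exp M (H t) (\<lambda>\<omega>. ennreal ((norm (Uh t \<omega> (Xh t \<omega>)))\<^sup>2)) \<omega> \<le> ennreal (\<sigma>\<^sup>2)" using noiseH by blast
      define Bp where "Bp = (\<lambda>\<omega>. X t \<omega> - xs - (\<alpha> * \<gamma>) *\<^sub>R F (Xh t \<omega>))"
      have BpH[measurable]: "Bp \<in> borel_measurable (H t)" unfolding Bp_def by measurable
      have BpM[measurable]: "Bp \<in> borel_measurable M" by (rule measurable_from_subalg[OF subH BpH])
      define Q where "Q = (\<lambda>\<omega>. (norm (Bp \<omega>))\<^sup>2 + 1 + (\<alpha> * \<gamma>)\<^sup>2 * \<sigma>\<^sup>2)"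
      have QM[measurable]: "Q \<in> borel_measurable M" unfolding Q_def by measurable
      have ZM[measurable]: "(\<lambda>\<omega>. ennreal (lyapV (X (Suc t) \<omega>) xs)) \<in> borel_measurable M"
        unfolding lyapV_def by measurable
      have K1: "AE \<omega> in M. nn_cond_exp M (H t) (\<lambda>\<omega>. ennreal (lyapV (X (Suc t) \<omega>) xs)) \<omega>
          \<le> ennreal ((norm (Bp \<omega>))\<^sup>2 + 1 + (\<alpha> * \<gamma>)\<^sup>2 * \<sigma>\<^sup>2)"
      proof (rule key[where U="\<lambda>\<omega>. Uh t \<omega> (Xh t \<omega>)" and D="\<lambda>\<omega>. - (2 * (\<alpha> * \<gamma>)) *\<^sub>R Bp \<omega>"
            and P="\<lambda>\<omega>. (norm (Bp \<omega>))\<^sup>2 + 1" and K="(\<alpha> * \<gamma>)\<^sup>2"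
            and Z="\<lambda>\<omega>. lyapV (X (Suc t) \<omega>) xs", OF prob subH UhM UhI UhC UhV])
        show "(\<lambda>\<omega>. (norm (Bp \<omega>))\<^sup>2 + 1) \<in> borel_measurable (H t)" by measurable
        show "(\<lambda>\<omega>. - (2 * (\<alpha> * \<gamma>)) *\<^sub>R Bp \<omega>) \<in> borel_measurable (H t)" by measurable
        show "0 \<le> (\<alpha> * \<gamma>)\<^sup>2" by simp
        show "(\<lambda>\<omega>. lyapV (X (Suc t) \<omega>) xs) \<in> borel_measurable M" unfolding lyapV_def by measurable
        fix \<omega> assume "\<omega> \<in> space M"
        have eq: "X (Suc t) \<omega> - xs = Bp \<omega> - (\<alpha> * \<gamma>) *\<^sub>R Uh t \<omega> (Xh t \<omega>)"
          using stepS unfolding Bp_def by (simp add: algebra_simps)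
        show "0 \<le> lyapV (X (Suc t) \<omega>) xs \<and> lyapV (X (Suc t) \<omega>) xs \<le>
          (norm (Bp \<omega>))\<^sup>2 + 1 + inner (- (2 * (\<alpha> * \<gamma>)) *\<^sub>R Bp \<omega>) (Uh t \<omega> (Xh t \<omega>)) + (\<alpha> * \<gamma>)\<^sup>2 * (norm (Uh t \<omega> (Xh t \<omega>)))\<^sup>2"
        proof
          show "0 \<le> lyapV (X (Suc t) \<omega>) xs" unfolding lyapV_def
            using zero_le_power2[of "norm (X (Suc t) \<omega> - xs)"] by linarith
          show "lyapV (X (Suc t) \<omega>) xs \<le>
          (norm (Bp \<omega>))\<^sup>2 + 1 + inner (- (2 * (\<alpha> * \<gamma>)) *\<^sub>R Bp \<omega>) (Uh t \<omega> (Xh t \<omega>)) + (\<alpha> * \<gamma>)\<^sup>2 * (norm (Uh t \<omega> (Xh t \<omega>)))\<^sup>2"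
            unfolding lyapV_def eq sq_expand by simp
        qed
      qed
      have K2f: "AE \<omega> in M. nn_cond_exp M (\<F> t) (\<lambda>\<omega>. ennreal (Q \<omega>)) \<omega>
          \<le> ennreal (((1 + \<delta>) * (q' * (norm (X t \<omega> - xs))\<^sup>2 + 2 * \<alpha> * \<gamma> * l) + 1 + (\<alpha> * \<gamma>)\<^sup>2 * \<sigma>\<^sup>2) + K2 * \<sigma>\<^sup>2)"
      proof (rule key[where U="\<lambda>\<omega>. U t \<omega> (X t \<omega>)" and D="\<lambda>\<omega>. 0"
            and P="\<lambda>\<omega>. (1 + \<delta>) * (q' * (norm (X t \<omega> - xs))\<^sup>2 + 2 * \<alpha> * \<gamma> * l) + 1 + (\<alpha> * \<gamma>)\<^sup>2 * \<sigma>\<^sup>2" and K="K2"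
            and Z="Q", OF prob subF Um Ui Uc Uv])
        show "(\<lambda>\<omega>. (1 + \<delta>) * (q' * (norm (X t \<omega> - xs))\<^sup>2 + 2 * \<alpha> * \<gamma> * l) + 1 + (\<alpha> * \<gamma>)\<^sup>2 * \<sigma>\<^sup>2) \<in> borel_measurable (\<F> t)" by measurable
        show "(\<lambda>\<omega>. 0::'a) \<in> borel_measurable (\<F> t)" by measurable
        show "0 \<le> K2" by (rule K20)
        show "Q \<in> borel_measurable M" by (rule QM)
        fix \<omega> assume "\<omega> \<in> space M"
        define u where "u = U t \<omega> (X t \<omega>)"
        define x where "x = X t \<omega>"
        define y where "y = x - \<gamma> *\<^sub>R F x"
        have xh: "Xh t \<omega> = y - \<gamma> *\<^sub>R u" using Xh_def unfolding y_def x_def u_def by (simp add: algebra_simps)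
        define Bb where "Bb = x - xs - (\<alpha> * \<gamma>) *\<^sub>R F y"
        define w where "w = (\<alpha> * \<gamma>) *\<^sub>R (F y - F (Xh t \<omega>))"
        have Bdec: "Bp \<omega> = Bb + w" unfolding Bp_def Bb_def w_def x_def by (simp add: algebra_simps)
        have sd: "(norm Bb)\<^sup>2 \<le> q * (norm (x - xs))\<^sup>2 + 2 * \<alpha> * \<gamma> * l"
          unfolding Bb_def y_def q_def
          by (rule seg_det[OF vi' lip0 lip m0 g L0 _ a0]) (use gL a1 in auto)
        have sd': "(norm Bb)\<^sup>2 \<le> q' * (norm (x - xs))\<^sup>2 + 2 * \<alpha> * \<gamma> * l"
        proof -
          have "q * (norm (x - xs))\<^sup>2 \<le> q' * (norm (x - xs))\<^sup>2" using q'1 by (intro mult_right_mono) auto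
          then show ?thesis using sd by linarith
        qed
        have wb: "norm w \<le> \<alpha> * \<gamma> * L * \<gamma> * norm u"
        proof -
          have "norm (F y - F (Xh t \<omega>)) \<le> L * norm (y - Xh t \<omega>)" by (rule lip)
          also have "\<dots> = L * (\<gamma> * norm u)" unfolding xh using g by simp
          finally have "norm (F y - F (Xh t \<omega>)) \<le> L * (\<gamma> * norm u)" .
          then have "\<alpha> * \<gamma> * norm (F y - F (Xh t \<omega>)) \<le> \<alpha> * \<gamma> * (L * (\<gamma> * norm u))"
            using a0 g by (intro mult_left_mono) auto
          moreover have "norm w = \<alpha> * \<gamma> * norm (F y - F (Xh t \<omega>))"
            unfolding w_def using a0 g by (simp only: norm_scaleR) simp
          ultimately show ?thesis by (simp add: algebra_simps)
        qed
        have wb2: "(norm w)\<^sup>2 \<le> (\<alpha> * \<gamma> * L * \<gamma>)\<^sup>2 * (norm u)\<^sup>2"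
        proof -
          have "(norm w)\<^sup>2 \<le> (\<alpha> * \<gamma> * L * \<gamma> * norm u)\<^sup>2" using wb by (intro power_mono) auto
          then show ?thesis by (simp add: power_mult_distrib)
        qed
        have "(norm (Bp \<omega>))\<^sup>2 \<le> (1 + \<delta>) * (norm Bb)\<^sup>2 + (1 + 1 / \<delta>) * (norm w)\<^sup>2"
          unfolding Bdec by (rule sq_split[OF d0])
        also have "\<dots> \<le> (1 + \<delta>) * (q' * (norm (x - xs))\<^sup>2 + 2 * \<alpha> * \<gamma> * l) + K2 * (norm u)\<^sup>2"
        proof -
          have "(1 + \<delta>) * (norm Bb)\<^sup>2 \<le> (1 + \<delta>) * (q' * (norm (x - xs))\<^sup>2 + 2 * \<alpha> * \<gamma> * l)"
            using sd' d0 by (intro mult_left_mono) auto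
          moreover have "(1 + 1 / \<delta>) * (norm w)\<^sup>2 \<le> (1 + 1 / \<delta>) * ((\<alpha> * \<gamma> * L * \<gamma>)\<^sup>2 * (norm u)\<^sup>2)"
            using wb2 d0 by (intro mult_left_mono) auto
          ultimately show ?thesis unfolding K2_def by (simp add: algebra_simps)
        qed
        finally have "(norm (Bp \<omega>))\<^sup>2 \<le> (1 + \<delta>) * (q' * (norm (x - xs))\<^sup>2 + 2 * \<alpha> * \<gamma> * l) + K2 * (norm u)\<^sup>2" .
        then show "0 \<le> Q \<omega> \<and> Q \<omega> \<le> (1 + \<delta>) * (q' * (norm (X t \<omega> - xs))\<^sup>2 + 2 * \<alpha> * \<gamma> * l) + 1 + (\<alpha> * \<gamma>)\<^sup>2 * \<sigma>\<^sup>2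
            + inner 0 (U t \<omega> (X t \<omega>)) + K2 * (norm (U t \<omega> (X t \<omega>)))\<^sup>2"
          unfolding Q_def x_def u_def by (simp add: add_nonneg_pos)
      qed
      have sfF: "sigma_finite_subalgebra M (\<F> t)" by (rule sfs_lemma[OF prob subF])
      have T1: "AE \<omega> in M. nn_cond_exp M (\<F> t) (\<lambda>\<omega>. ennreal (lyapV (X (Suc t) \<omega>) xs)) \<omega>
          = nn_cond_exp M (\<F> t) (nn_cond_exp M (H t) (\<lambda>\<omega>. ennreal (lyapV (X (Suc t) \<omega>) xs))) \<omega>"
        by (rule sigma_finite_subalgebra.nn_cond_exp_nested_subalg[OF sfF subH subFH ZM])
      have T2: "AE \<omega> in M. nn_cond_exp M (\<F> t) (nn_cond_exp M (H t) (\<lambda>\<omega>. ennreal (lyapV (X (Suc t) \<omega>) xs))) \<omega>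
          \<le> nn_cond_exp M (\<F> t) (\<lambda>\<omega>. ennreal (Q \<omega>)) \<omega>"
        by (rule sigma_finite_subalgebra.nn_cond_exp_mono[OF sfF]) (use K1 in \<open>auto simp: Q_def\<close>)
      show "AE \<omega> in M. nn_cond_exp M (\<F> t) (\<lambda>\<omega>. ennreal (lyapV (X (Suc t) \<omega>) xs)) \<omega>
                   \<le> ennreal (c1 * lyapV (X t \<omega>) xs + c2)"
        using T1 T2 K2f
      proof eventually_elim
        case (elim \<omega>)
        have "((1 + \<delta>) * (q' * (norm (X t \<omega> - xs))\<^sup>2 + 2 * \<alpha> * \<gamma> * l) + 1 + (\<alpha> * \<gamma>)\<^sup>2 * \<sigma>\<^sup>2) + K2 * \<sigma>\<^sup>2
            \<le> c1 * lyapV (X t \<omega>) xs + c2" unfolding lyapV_def c2_def using c1 unfolding c1_def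
          by (simp add: algebra_simps)
        then have fin: "ennreal (((1 + \<delta>) * (q' * (norm (X t \<omega> - xs))\<^sup>2 + 2 * \<alpha> * \<gamma> * l) + 1 + (\<alpha> * \<gamma>)\<^sup>2 * \<sigma>\<^sup>2) + K2 * \<sigma>\<^sup>2)
            \<le> ennreal (c1 * lyapV (X t \<omega>) xs + c2)" by (rule ennreal_leI)
        have a: "nn_cond_exp M (\<F> t) (\<lambda>\<omega>. ennreal (lyapV (X (Suc t) \<omega>) xs)) \<omega>
            \<le> nn_cond_exp M (\<F> t) (\<lambda>\<omega>. ennreal (Q \<omega>)) \<omega>"
          using elim(1) elim(2) by simp
        show ?case by (rule order_trans[OF a order_trans[OF elim(3) fin]])
      qed
    qed
  qed
qed

end
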